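(* Let $a\in\mathbb{C}$ with $|a-\tfrac14|=\tfrac14$ and $a\neq 0$, and let $\varphi(z)=az^2+(1-2a)z+a$. Then the iterates $\varphi_n$ converge to the constant $1$ uniformly on all of $\mathbb{D}$, i.e. $\lim_{n\to\infty}\sup_{z\in\mathbb{D}}|\varphi_n(z)-1|=0$.
   Context: $\mathbb{D}$ is the open unit disk. $\varphi_n$ denotes the $n$-th iterate $\varphi\circ\cdots\circ\varphi$ ($n$ times). Such $\varphi$ is an analytic self-map of $\mathbb{D}$ with $\varphi(1)=1$, $\varphi'(1)=1$. *)

theory Defs
  imports "HOL-Analysis.Analysis"
begin

end

theory Submission
  imports Defs
begin

lemma Re_inv: "Re (1 / z) = Re z / (cmod z)^2"
  using Re_Reals_divide[of 1 z] by simp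

lemma a_facts:
  fixes a :: complex
  assumes "cmod (a - 1/4) = 1/4" "a \<noteq> 0"
  shows "Re a = 2 * (cmod a)^2" "cmod a \<le> 1/2" "Re a > 0" "Re (1/a) = 2"
proof -
  have "(cmod (a - 1/4))^2 = 1/16" unfolding assms(1) by (simp add: power2_eq_square)
  hence h: "(Re a - 1/4)^2 + (Im a)^2 = 1/16" by (simp add: cmod_power2)
  show 1: "Re a = 2 * (cmod a)^2" using h unfolding cmod_power2 by (simp add: power2_eq_square algebra_simps)
  show "cmod a \<le> 1/2" using norm_triangle_ineq[of "a - 1/4" "1/4"] assms(1) by simp
  have p: "cmod a > 0" using assms(2) by simp
  thus "Re a > 0" using 1 by simp
  show "Re (1/a) = 2" using 1 p by (simp add: Re_inv)
qed

lemma ball_iff: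
  fixes w :: complex
  assumes "w \<noteq> 0"
  shows "cmod (w+1) < 1 \<longleftrightarrow> Re (1/w) < -1/2"
proof -
  have D: "(cmod w)^2 > 0" using assms by simp
  have "cmod (w+1) < 1 \<longleftrightarrow> (cmod (w+1))^2 < 1"
    using abs_square_less_1[of "cmod (w+1)"] by simp
  also have "\<dots> \<longleftrightarrow> (Re w + 1)^2 + (Im w)^2 < 1" by (simp add: cmod_power2)
  also have "\<dots> \<longleftrightarrow> (cmod w)^2 + 2 * Re w < 0"
    unfolding cmod_power2 by (simp add: power2_eq_square algebra_simps)
  also have "\<dots> \<longleftrightarrow> Re w / (cmod w)^2 < -1/2"
    using pos_divide_less_eq[OF D, of "Re w" "-1/2"] by linarith
  finally show ?thesis by (simp add: Re_inv)
qed

lemma step: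
  fixes a w :: complex
  assumes "a \<noteq> 0" "Re (1/a) = 2" "w \<noteq> 0" "cmod (w+1) < 1"
  shows "2 + Re w > 0" "1/a + w \<noteq> 0" "w + a*w^2 \<noteq> 0"
    "1/(w + a*w^2) = 1/w - 1/(1/a + w)"
    "Re (1/(1/a+w)) \<ge> (2 + Re w)/(cmod (1/a)+2)^2"
proof -
  have "\<bar>Re (w+1)\<bar> < 1" using abs_Re_le_cmod[of "w+1"] assms(4) by linarith
  thus p: "2 + Re w > 0" by simp
  have R: "Re (1/a + w) = 2 + Re w" using assms(2) by simp
  thus nz: "1/a + w \<noteq> 0" using p by (metis zero_complex.simps(1) less_irrefl)
  have eq: "w + a*w^2 = a * w * (1/a + w)" using assms(1) by (simp add: field_simps power2_eq_square)
  thus "w + a*w^2 \<noteq> 0" using nz assms by simp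
  have e1: "1/w - 1/(1/a + w) = (1/a) / (w * (1/a + w))"
  proof -
    have "1/w - 1/(1/a + w) = ((1/a + w) - w) / (w * (1/a + w))"
      using nz assms(3) by (simp add: diff_frac_eq)
    thus ?thesis by simp
  qed
  have e2: "1/(a * w * (1/a + w)) = (1/a) / (w * (1/a + w))" by (simp add: divide_simps)
  show "1/(w + a*w^2) = 1/w - 1/(1/a + w)" unfolding eq e1 e2 ..
  have cw: "cmod w \<le> 2" using norm_triangle_ineq4[of "w+1" 1] assms(4) by simp
  have "cmod (1/a + w) \<le> cmod (1/a) + 2" using norm_triangle_ineq[of "1/a" w] cw by linarith
  moreover have "cmod (1/a + w) > 0" using nz by simp
  ultimately have "(cmod (1/a + w))^2 \<le> (cmod (1/a)+2)^2" "(cmod (1/a + w))^2 > 0"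
    by (auto intro: power_mono)
  hence "(2 + Re w)/(cmod (1/a)+2)^2 \<le> (2 + Re w)/(cmod (1/a+w))^2"
    using p by (intro divide_left_mono mult_pos_pos) (auto simp: add_pos_nonneg)
  thus "Re (1/(1/a+w)) \<ge> (2 + Re w)/(cmod (1/a)+2)^2" using Re_inv[of "1/a+w"] R by simp
qed

lemma one_step:
  fixes a w :: complex
  assumes "cmod (a - 1/4) = 1/4" "a \<noteq> 0" "w \<noteq> 0" "cmod (w+1) < 1"
  shows "w + a*w^2 \<noteq> 0" "cmod ((w + a*w^2)+1) < 1"
    "Re (1/(w + a*w^2)) \<le> Re (1/w) - (2 + Re w)/(cmod (1/a)+2)^2"
proof -
  note af = a_facts[OF assms(1,2)]
  note st = step[OF assms(2) af(4) assms(3,4)]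
  show nz: "w + a*w^2 \<noteq> 0" by (rule st(3))
  show le: "Re (1/(w + a*w^2)) \<le> Re (1/w) - (2 + Re w)/(cmod (1/a)+2)^2"
    using st(4,5) by simp
  have "(2 + Re w)/(cmod (1/a)+2)^2 \<ge> 0" using st(1) by simp
  moreover have "Re (1/w) < -1/2" using ball_iff[OF assms(3)] assms(4) by simp
  ultimately have "Re (1/(w + a*w^2)) < -1/2" using le by linarith
  thus "cmod ((w + a*w^2)+1) < 1" using ball_iff[OF nz] by simp
qed

lemma two_step:
  fixes a w :: complex
  assumes "cmod (a - 1/4) = 1/4" "a \<noteq> 0" "w \<noteq> 0" "cmod (w+1) < 1"
  defines "w1 \<equiv> w + a*w^2"
  shows "Re (1/(w1 + a*w1^2)) \<le> Re (1/w) - min (2*(Re a)^2/9) (2*Re a) / (cmod (1/a)+2)^2"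
proof -
  define K where "K = (cmod (1/a)+2)^2"
  define \<epsilon> where "\<epsilon> = 2*(Re a)^2/9"
  note af = a_facts[OF assms(1,2)]
  note o1 = one_step[OF assms(1-4), folded w1_def K_def]
  note o2 = one_step[OF assms(1,2) o1(1,2), folded K_def]
  have "cmod (1/a) + 2 > 0" by (simp add: add_nonneg_pos)
  hence Kp: "K > 0" unfolding K_def by simp
  have p1: "2 + Re w1 > 0" using step[OF assms(2) af(4) o1(1,2)] by simp
  show ?thesis
  proof (cases "2 + Re w \<ge> \<epsilon>")
    case True
    have "min \<epsilon> (2*Re a) / K \<le> \<epsilon> / K" using Kp by (simp add: divide_right_mono)
    also have "\<dots> \<le> (2 + Re w) / K" using Kp True by (simp add: divide_right_mono)
    moreover have "(2 + Re w1) / K \<ge> 0" using p1 Kp by simp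
    ultimately show ?thesis using o1(3) o2(3) unfolding K_def \<epsilon>_def by linarith
  next
    case False
    have "(cmod (w+2))^2 = (cmod (w+1))^2 + 2*(Re w + 1) + 1"
      unfolding cmod_power2 by (simp add: power2_eq_square algebra_simps)
    also have "\<dots> < 1 + 2*(Re w + 1) + 1"
      using assms(4) abs_square_less_1[of "cmod (w+1)"] by simp
    also have "\<dots> < 2 * \<epsilon>" using False by simp
    also have "\<dots> = (2 * Re a / 3)^2" unfolding \<epsilon>_def by (simp add: power2_eq_square)
    finally have "(cmod (w+2))^2 < (2 * Re a / 3)^2" .
    hence c2: "cmod (w+2) < 2 * Re a / 3"
      using power2_less_imp_less[of "cmod (w+2)" "2*Re a/3"] af(3) by simp
    have id: "w1 + 2 - 4*a = (w+2)*(1 + a*(w-2))" unfolding w1_def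
      by (simp add: power2_eq_square algebra_simps)
    have "cmod (w - 2) \<le> cmod (w+1) + 3" using norm_triangle_ineq[of "w+1" "-3"] by simp
    hence cw: "cmod (w - 2) < 4" using assms(4) by simp
    have "cmod (1 + a*(w-2)) \<le> 1 + cmod a * cmod (w-2)"
      using norm_triangle_ineq[of 1 "a*(w-2)"] by (simp add: norm_mult)
    also have "\<dots> \<le> 1 + (1/2) * 4"
      using af(2) cw by (intro add_left_mono mult_mono) auto
    finally have c3: "cmod (1 + a*(w-2)) \<le> 3" by simp
    have "cmod (w1 + 2 - 4*a) \<le> cmod (w+2) * 3"
      unfolding id norm_mult by (intro mult_left_mono c3) auto
    also have "\<dots> < 2 * Re a" using c2 by simp
    finally have "cmod (w1 + 2 - 4*a) < 2 * Re a" .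
    moreover have "- Re (w1 + 2 - 4*a) \<le> cmod (w1 + 2 - 4*a)"
      using abs_Re_le_cmod[of "w1 + 2 - 4*a"] by simp
    ultimately have r: "2 + Re w1 > 2 * Re a" by simp
    have "min \<epsilon> (2*Re a) / K \<le> 2 * Re a / K" using Kp by (simp add: divide_right_mono)
    also have "\<dots> \<le> (2 + Re w1) / K" using Kp r by (simp add: divide_right_mono)
    moreover have "(2 + Re w) / K \<ge> 0" using step(1)[OF assms(2) af(4) assms(3,4)] Kp by simp
    ultimately show ?thesis using o1(3) o2(3) unfolding K_def \<epsilon>_def by linarith
  qed
qed


lemma iter_in:
  fixes a w :: complex
  assumes "cmod (a - 1/4) = 1/4" "a \<noteq> 0" "w \<noteq> 0" "cmod (w+1) < 1"
    and psi: "\<psi> = (\<lambda>w. w + a*w^2)"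
  shows "(\<psi>^^n) w \<noteq> 0 \<and> cmod ((\<psi>^^n) w + 1) < 1"
proof (induction n)
  case 0 thus ?case using assms by simp
next
  case (Suc n)
  thus ?case using one_step[OF assms(1,2), of "(\<psi>^^n) w"] by (simp add: psi)
qed

lemma iter_bound:
  fixes a w :: complex
  assumes "cmod (a - 1/4) = 1/4" "a \<noteq> 0" "w \<noteq> 0" "cmod (w+1) < 1"
    and psi: "\<psi> = (\<lambda>w. w + a*w^2)"
  defines "\<eta> \<equiv> min (2*(Re a)^2/9) (2*Re a) / (cmod (1/a)+2)^2"
  shows "Re (1 / (\<psi>^^n) w) \<le> -1/2 - real (n div 2) * \<eta>"
proof -
  have ps: "\<psi> x = x + a*x^2" for x using psi by simp
  have ev: "Re (1 / (\<psi>^^(2*k)) w) \<le> -1/2 - real k * \<eta>" for k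
  proof (induction k)
    case 0 thus ?case using ball_iff[OF assms(3)] assms(4) by simp
  next
    case (Suc k)
    define x where "x = (\<psi>^^(2*k)) w"
    have "2*Suc k = Suc (Suc (2*k))" by simp
    hence eq: "(\<psi>^^(2*Suc k)) w = \<psi> (\<psi> x)" unfolding x_def by (simp only: funpow.simps comp_apply)
    note I = iter_in[OF assms(1-4) psi, of "2*k", folded x_def]
    have T: "Re (1 / \<psi> (\<psi> x)) \<le> Re (1 / x) - \<eta>"
      unfolding \<eta>_def ps using two_step[OF assms(1,2) I[THEN conjunct1] I[THEN conjunct2]] .
    have IH: "Re (1 / x) \<le> -1/2 - real k * \<eta>" using Suc.IH unfolding x_def .
    have "real (Suc k) * \<eta> = real k * \<eta> + \<eta>" by (simp add: algebra_simps)
    thus ?case unfolding eq using IH T by linarith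
  qed
  show ?thesis
  proof (cases "even n")
    case True
    then obtain k where nk: "n = 2*k" by blast
    have d: "n div 2 = k" unfolding nk by simp
    have "Re (1 / (\<psi>^^n) w) \<le> -1/2 - real k * \<eta>" unfolding nk by (rule ev)
    thus ?thesis unfolding d .
  next
    case False
    then obtain k where n0: "n = 2*k + 1" by (rule oddE)
    hence n: "n = Suc (2*k)" by simp
    define x where "x = (\<psi>^^(2*k)) w"
    have eq: "(\<psi>^^n) w = \<psi> x" unfolding n x_def by (simp only: funpow.simps comp_apply)
    note I = iter_in[OF assms(1-4) psi, of "2*k", folded x_def]
    have "Re (1 / (\<psi>^^n) w) \<le> Re (1 / x) - (2 + Re x)/(cmod (1/a)+2)^2"
      unfolding eq ps using one_step(3)[OF assms(1,2) I[THEN conjunct1] I[THEN conjunct2]] .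
    moreover have "(2 + Re x)/(cmod (1/a)+2)^2 \<ge> 0"
      using step(1)[OF assms(2) a_facts(4)[OF assms(1,2)] I[THEN conjunct1] I[THEN conjunct2]]
      by (intro divide_nonneg_nonneg) auto
    moreover have d: "n div 2 = k" using n by simp
    moreover have "Re (1 / x) \<le> -1/2 - real k * \<eta>" using ev[of k] unfolding x_def .
    ultimately show ?thesis unfolding d by linarith
  qed
qed

lemma eta_pos:
  fixes a :: complex
  assumes "cmod (a - 1/4) = 1/4" "a \<noteq> 0"
  shows "min (2*(Re a)^2/9) (2*Re a) / (cmod (1/a)+2)^2 > 0"
proof -
  have "Re a > 0" using a_facts[OF assms] by simp
  moreover have "cmod (1/a) + 2 > 0" by (simp add: add_nonneg_pos)
  hence "(cmod (1/a) + 2)^2 > 0" by simp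
  moreover have "min (2*(Re a)^2/9) (2*Re a) > 0" using \<open>Re a > 0\<close> by simp
  ultimately show ?thesis by (intro divide_pos_pos) auto
qed

theorem mainTheorem2:
  fixes a :: complex and \<phi> :: "complex \<Rightarrow> complex"
  assumes "cmod (a - 1/4) = 1/4" and "a \<noteq> 0"
    and "\<And>z. \<phi> z = a * z^2 + (1 - 2*a) * z + a"
  shows "uniform_limit (ball 0 1) (\<lambda>n. (\<phi> ^^ n)) (\<lambda>_. 1) sequentially"
proof -
  define \<psi> where "\<psi> = (\<lambda>w::complex. w + a*w^2)"
  define \<eta> where "\<eta> = min (2*(Re a)^2/9) (2*Re a) / (cmod (1/a)+2)^2"
  have \<eta>p: "\<eta> > 0" unfolding \<eta>_def using eta_pos[OF assms(1,2)] .
  have conj: "(\<phi>^^n) z = (\<psi>^^n) (z - 1) + 1" for n z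
  proof (induction n)
    case 0 thus ?case by simp
  next
    case (Suc n)
    have ph: "\<phi> (x + 1) = \<psi> x + 1" for x
      unfolding assms(3) \<psi>_def by (simp add: power2_eq_square algebra_simps)
    have "(\<phi>^^Suc n) z = \<phi> ((\<phi>^^n) z)" by simp
    also have "\<dots> = \<psi> ((\<psi>^^n) (z - 1)) + 1" unfolding Suc ph ..
    finally show ?case by simp
  qed
  have bnd: "cmod ((\<phi>^^n) z - 1) \<le> 1 / (1/2 + real (n div 2) * \<eta>)" if z: "z \<in> ball 0 1" for n z
  proof -
    have zn: "z - 1 \<noteq> 0" using z by auto
    have zb: "cmod (z - 1 + 1) < 1" using z by simp
    have R: "Re (1 / (\<psi>^^n) (z-1)) \<le> -1/2 - real (n div 2) * \<eta>"
      using iter_bound[OF assms(1,2) zn zb \<psi>_def] unfolding \<eta>_def .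
    have pos: "1/2 + real (n div 2) * \<eta> > 0" using \<eta>p by (simp add: add_pos_nonneg)
    define u where "u = (\<psi>^^n) (z-1)"
    have "1/2 + real (n div 2) * \<eta> \<le> \<bar>Re (1/u)\<bar>" using R pos unfolding u_def by linarith
    also have "\<dots> \<le> cmod (1/u)" by (rule abs_Re_le_cmod)
    also have "\<dots> = 1 / cmod u" by (simp add: norm_divide)
    finally have "1/2 + real (n div 2) * \<eta> \<le> 1 / cmod u" .
    moreover have "cmod u > 0" using iter_in[OF assms(1,2) zn zb \<psi>_def, of n] unfolding u_def by simp
    ultimately have "(1/2 + real (n div 2) * \<eta>) * cmod u \<le> 1"
      by (simp add: pos_le_divide_eq)
    hence "cmod u \<le> 1 / (1/2 + real (n div 2) * \<eta>)"
      using pos by (simp add: pos_le_divide_eq mult.commute)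
    thus ?thesis using conj[of n z] unfolding u_def by simp
  qed
  show ?thesis unfolding uniform_limit_iff
  proof (intro allI impI)
    fix e :: real assume e: "e > 0"
    obtain N :: nat where N: "real N > 1 / (e * \<eta>)" using reals_Archimedean2 by blast
    show "\<forall>\<^sub>F n in sequentially. \<forall>z\<in>ball 0 1. dist ((\<phi>^^n) z) 1 < e"
      unfolding eventually_sequentially
    proof (intro exI allI impI ballI)
      fix n z assume n: "2*N \<le> n" and z: "z \<in> ball (0::complex) 1"
      have k: "real N \<le> real (n div 2)" using n by simp
      have Np: "real N * \<eta> > 1 / e" using N e \<eta>p by (simp add: field_simps)
      have "real N * \<eta> \<le> real (n div 2) * \<eta>" using k \<eta>p by simp
      hence big: "1/2 + real (n div 2) * \<eta> > 1/e" using Np by linarith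
      have "1 / (1/2 + real (n div 2) * \<eta>) < 1 / (1/e)"
      proof (rule divide_strict_left_mono[OF big])
        have "0 < 1/e" using e by simp
        hence "0 < 1/2 + real (n div 2) * \<eta>" using big by linarith
        thus "0 < (1/2 + real (n div 2) * \<eta>) * (1/e)" using e by simp
      qed simp
      hence "1 / (1/2 + real (n div 2) * \<eta>) < e" by simp
      thus "dist ((\<phi>^^n) z) 1 < e" using bnd[OF z, of n] by (simp add: dist_norm)
    qed
  qed
qed

end
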